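(* For $w>0$, as an identity of formal power series in $z$, \[\mathrm{DAG}(z,w,u)=1+\frac{\mathcal H(z,w,u)}{1-\mathcal H\!\left(z,w,\frac w{1+w}\right)},\qquad\text{where }\ \mathcal H(z,w,u)=z\int_0^u \mathrm{DAG}\!\left(\frac z{1+w},w,t\right)dt.\]
   Context: For a labelled DAG $G$ (directed acyclic graph on vertex set $\{1,\dots,n\}$, $n\ge0$), $v(G),e(G),s(G)$ denote its numbers of vertices, edges and sources (vertices of in-degree $0$). $\mathrm{DAG}(z,w,u)=\sum_G \frac{z^{v(G)}w^{e(G)}u^{s(G)}}{(1+w)^{\binom{v(G)}{2}}v(G)!}$, summed over all labelled DAGs. (It is known that $\mathrm{DAG}(z,w,u)=\mathrm{Set}((u-1)z,w)/\mathrm{Set}(-z,w)$ with $\mathrm{Set}(z,w)=\sum_{n\ge0}\frac{z^n}{(1+w)^{\binom n2}n!}$.) *)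

theory Defs
  imports "HOL-Analysis.Analysis" "HOL-Computational_Algebra.Formal_Power_Series"
begin

definition dags :: "nat \<Rightarrow> (nat \<times> nat) set set" where
  "dags n = {E. E \<subseteq> {1..n} \<times> {1..n} \<and> acyclic E}"

definition sources :: "nat \<Rightarrow> (nat \<times> nat) set \<Rightarrow> nat" where
  "sources n E = card {v \<in> {1..n}. \<not> (\<exists>x. (x, v) \<in> E)}"

text \<open>n-th coefficient (in z) of DAG(z,w,u).\<close>
definition dag_coeff :: "real \<Rightarrow> real \<Rightarrow> nat \<Rightarrow> real" where
  "dag_coeff w u n =
     (\<Sum>E\<in>dags n. w ^ card E * u ^ sources n E) / ((1 + w) ^ (n choose 2) * fact n)"

definition DAG_fps :: "real \<Rightarrow> real \<Rightarrow> real fps" where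
  "DAG_fps w u = Abs_fps (dag_coeff w u)"

text \<open>H(z,w,u) = z * integral_0^u DAG(z/(1+w), w, t) dt, integrated coefficientwise.\<close>
definition H_fps :: "real \<Rightarrow> real \<Rightarrow> real fps" where
  "H_fps w u = fps_X * Abs_fps (\<lambda>n.
     LBINT t=ereal 0..ereal u. fps_nth (DAG_fps w t oo (fps_const (1 / (1 + w)) * fps_X)) n)"

end

theory Submission
  imports Defs
begin


definition dagsOn :: "nat set \<Rightarrow> (nat \<times> nat) set set" where
  "dagsOn V = {E. E \<subseteq> V \<times> V \<and> acyclic E}"

definition srcs :: "nat set \<Rightarrow> (nat \<times> nat) set \<Rightarrow> nat set" where
  "srcs V E = {v \<in> V. \<not> (\<exists>x. (x, v) \<in> E)}"

lemma finite_dagsOn: "finite V \<Longrightarrow> finite (dagsOn V)"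
proof -
  assume "finite V"
  then have "dagsOn V \<subseteq> Pow (V \<times> V)" "finite (Pow (V \<times> V))" by (auto simp: dagsOn_def)
  then show ?thesis using finite_subset by blast
qed

lemma pow_sum: "finite A \<Longrightarrow> (\<Sum>B\<in>Pow A. (x::real) ^ card B) = (x + 1) ^ card A"
proof -
  assume f: "finite A"
  have "(x + 1) ^ card A = (\<Prod>a\<in>A. x + 1)" by simp
  also have "\<dots> = (\<Sum>B\<in>Pow A. (\<Prod>a\<in>B. x) * (\<Prod>a\<in>A-B. 1))" by (rule prod_add[OF f])
  also have "\<dots> = (\<Sum>B\<in>Pow A. x ^ card B)" by simp
  finally show ?thesis by simp
qed

lemma has_source:
  assumes "finite V" "V \<noteq> {}" "E \<in> dagsOn V"
  shows "srcs V E \<noteq> {}"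
proof -
  have sub: "E \<subseteq> V \<times> V" and ac: "acyclic E" using assms(3) by (auto simp: dagsOn_def)
  have "finite E" using sub assms(1) finite_subset by blast
  then have "wf E" using ac finite_acyclic_wf by blast
  then obtain z where "z \<in> V" "\<forall>y. (y, z) \<in> E \<longrightarrow> y \<notin> V"
    using assms(2) wf_eq_minimal by (metis ex_in_conv)
  then have "z \<in> srcs V E" using sub unfolding srcs_def by blast
  then show ?thesis by blast
qed

lemma acyclic_split:
  assumes "acyclic E2" "E2 \<subseteq> (V - S) \<times> (V - S)" "F \<subseteq> S \<times> (V - S)"
  shows "acyclic (E2 \<union> F)"
proof -
  have key: "(x, y) \<in> (E2 \<union> F)\<^sup>+ \<Longrightarrow> x \<notin> S \<Longrightarrow> (x, y) \<in> E2\<^sup>+" for x y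
  proof (induction rule: trancl_induct)
    case (base y)
    then show ?case using assms(3) by blast
  next
    case (step y z)
    then have "(x, y) \<in> E2\<^sup>+" by blast
    then have "y \<in> Range E2" by (metis Range.intros trancl_range)
    then have "y \<notin> S" using assms(2) by blast
    then have "(y, z) \<in> E2" using step assms(3) by blast
    then show ?case using \<open>(x, y) \<in> E2\<^sup>+\<close> by (meson trancl.trancl_into_trancl)
  qed
  show ?thesis unfolding acyclic_def
  proof
    fix x
    show "(x, x) \<notin> (E2 \<union> F)\<^sup>+"
    proof
      assume h: "(x, x) \<in> (E2 \<union> F)\<^sup>+"
      then have "x \<in> Range (E2 \<union> F)" by (metis Range.intros trancl_range)
      then have "x \<notin> S" using assms(2,3) by blast
      then have "(x, x) \<in> E2\<^sup>+" using key h by blast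
      then show False using assms(1) unfolding acyclic_def by blast
    qed
  qed
qed

lemma split_bij:
  assumes "finite V" "S \<subseteq> V"
  shows "bij_betw (\<lambda>(E2, F). E2 \<union> F) (dagsOn (V - S) \<times> Pow (S \<times> (V - S)))
           {E \<in> dagsOn V. S \<subseteq> srcs V E}"
proof (rule bij_betw_imageI)
  show "inj_on (\<lambda>(E2, F). E2 \<union> F) (dagsOn (V - S) \<times> Pow (S \<times> (V - S)))"
  proof (rule inj_onI)
    fix p p'
    assume h0: "p \<in> dagsOn (V - S) \<times> Pow (S \<times> (V - S))"
      "p' \<in> dagsOn (V - S) \<times> Pow (S \<times> (V - S))" "(\<lambda>(E2, F). E2 \<union> F) p = (\<lambda>(E2, F). E2 \<union> F) p'"
    obtain E2 F E2' F' where pp: "p = (E2, F)" "p' = (E2', F')" by fastforce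
    have h: "(E2, F) \<in> dagsOn (V - S) \<times> Pow (S \<times> (V - S))"
      "(E2', F') \<in> dagsOn (V - S) \<times> Pow (S \<times> (V - S))" "E2 \<union> F = E2' \<union> F'"
      using h0 pp by auto
    have a: "E2 = (E2 \<union> F) \<inter> ((V - S) \<times> (V - S))" "E2' = (E2' \<union> F') \<inter> ((V - S) \<times> (V - S))"
      "F = (E2 \<union> F) \<inter> (S \<times> (V - S))" "F' = (E2' \<union> F') \<inter> (S \<times> (V - S))"
      using h(1,2) by (auto simp: dagsOn_def)
    have "E2 = (E2 \<union> F) \<inter> ((V - S) \<times> (V - S))" by (rule a(1))
    also have "\<dots> = (E2' \<union> F') \<inter> ((V - S) \<times> (V - S))" by (simp only: h(3))
    also have "\<dots> = E2'" by (rule a(2)[symmetric])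
    finally have 1: "E2 = E2'" .
    have "F = (E2 \<union> F) \<inter> (S \<times> (V - S))" by (rule a(3))
    also have "\<dots> = (E2' \<union> F') \<inter> (S \<times> (V - S))" by (simp only: h(3))
    also have "\<dots> = F'" by (rule a(4)[symmetric])
    finally show "p = p'" using 1 pp by simp
  qed
  show "(\<lambda>(E2, F). E2 \<union> F) ` (dagsOn (V - S) \<times> Pow (S \<times> (V - S))) = {E \<in> dagsOn V. S \<subseteq> srcs V E}"
  proof
    show "(\<lambda>(E2, F). E2 \<union> F) ` (dagsOn (V - S) \<times> Pow (S \<times> (V - S))) \<subseteq> {E \<in> dagsOn V. S \<subseteq> srcs V E}"
    proof
      fix E assume "E \<in> (\<lambda>(E2, F). E2 \<union> F) ` (dagsOn (V - S) \<times> Pow (S \<times> (V - S)))"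
      then obtain E2 F where h: "E2 \<in> dagsOn (V - S)" "F \<in> Pow (S \<times> (V - S))" and e: "E = E2 \<union> F" by auto
      then have "acyclic (E2 \<union> F)" using acyclic_split[of E2 V S F] by (auto simp: dagsOn_def)
      moreover have "E2 \<union> F \<subseteq> V \<times> V" using h assms(2) by (auto simp: dagsOn_def)
      moreover have "S \<subseteq> srcs V (E2 \<union> F)" using h assms(2) by (auto simp: dagsOn_def srcs_def)
      ultimately show "E \<in> {E \<in> dagsOn V. S \<subseteq> srcs V E}" using e by (simp add: dagsOn_def)
    qed
    show "{E \<in> dagsOn V. S \<subseteq> srcs V E} \<subseteq> (\<lambda>(E2, F). E2 \<union> F) ` (dagsOn (V - S) \<times> Pow (S \<times> (V - S)))"
    proof
      fix E assume "E \<in> {E \<in> dagsOn V. S \<subseteq> srcs V E}"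
      then have h: "E \<in> dagsOn V" "S \<subseteq> srcs V E" by auto
      let ?E2 = "E \<inter> ((V - S) \<times> (V - S))" and ?F = "E \<inter> (S \<times> (V - S))"
      have sub: "E \<subseteq> V \<times> V" and ac: "acyclic E" using h(1) by (auto simp: dagsOn_def)
      have "E = ?E2 \<union> ?F" using sub h(2) by (auto simp: srcs_def)
      moreover have "?E2 \<in> dagsOn (V - S)" using ac acyclic_subset[of E ?E2] by (auto simp: dagsOn_def)
      moreover have "?F \<in> Pow (S \<times> (V - S))" by blast
      ultimately show "E \<in> (\<lambda>(E2, F). E2 \<union> F) ` (dagsOn (V - S) \<times> Pow (S \<times> (V - S)))"
        by (metis (no_types, lifting) SigmaI case_prod_conv image_eqI)
    qed
  qed
qed

lemma split_sum:
  assumes "finite V" "S \<subseteq> V"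
  shows "(\<Sum>E\<in>{E \<in> dagsOn V. S \<subseteq> srcs V E}. (w::real) ^ card E)
       = (\<Sum>E\<in>dagsOn (V - S). w ^ card E) * (w + 1) ^ (card S * card (V - S))"
proof -
  have fS: "finite S" "finite (V - S)" using assms finite_subset by auto
  have "(\<Sum>E\<in>{E \<in> dagsOn V. S \<subseteq> srcs V E}. w ^ card E)
     = (\<Sum>p\<in>dagsOn (V - S) \<times> Pow (S \<times> (V - S)). w ^ card ((\<lambda>(E2, F). E2 \<union> F) p))"
    by (rule sum.reindex_bij_betw[OF split_bij[OF assms], symmetric])
  also have "\<dots> = (\<Sum>p\<in>dagsOn (V - S) \<times> Pow (S \<times> (V - S)). w ^ card (fst p) * w ^ card (snd p))"
  proof (rule sum.cong[OF refl])
    fix p assume "p \<in> dagsOn (V - S) \<times> Pow (S \<times> (V - S))"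
    then obtain E2 F where pp: "p = (E2, F)" and h: "E2 \<in> dagsOn (V - S)" "F \<in> Pow (S \<times> (V - S))" by auto
    have "finite E2" using h fS unfolding dagsOn_def by (auto intro: finite_subset)
    moreover have "finite F" using h fS by (auto intro: finite_subset)
    moreover have "E2 \<inter> F = {}" using h by (auto simp: dagsOn_def)
    ultimately have "card (E2 \<union> F) = card E2 + card F" by (rule card_Un_disjoint)
    then show "w ^ card ((\<lambda>(E2, F). E2 \<union> F) p) = w ^ card (fst p) * w ^ card (snd p)"
      by (simp add: pp power_add)
  qed
  also have "\<dots> = (\<Sum>E\<in>dagsOn (V - S). w ^ card E) * (\<Sum>F\<in>Pow (S \<times> (V - S)). w ^ card F)"
    unfolding sum_product sum.cartesian_product by (simp add: case_prod_beta)
  also have "(\<Sum>F\<in>Pow (S \<times> (V - S)). w ^ card F) = (w + 1) ^ (card S * card (V - S))"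
    using pow_sum[of "S \<times> (V - S)" w] fS by (simp add: card_cartesian_product)
  finally show ?thesis .
qed

lemma L1:
  assumes fV: "finite V"
  shows "(\<Sum>E\<in>dagsOn V. (w::real) ^ card E * (x + 1) ^ card (srcs V E))
       = (\<Sum>S\<in>Pow V. x ^ card S * (w + 1) ^ (card S * card (V - S)) * (\<Sum>E\<in>dagsOn (V - S). w ^ card E))"
proof -
  have fD: "finite (dagsOn V)" using fV by (rule finite_dagsOn)
  have "(\<Sum>E\<in>dagsOn V. w ^ card E * (x + 1) ^ card (srcs V E))
      = (\<Sum>E\<in>dagsOn V. \<Sum>S\<in>{S. S \<in> Pow V \<and> S \<subseteq> srcs V E}. w ^ card E * x ^ card S)"
  proof (rule sum.cong[OF refl])
    fix E assume "E \<in> dagsOn V"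
    have ss: "srcs V E \<subseteq> V" by (auto simp: srcs_def)
    then have fs: "finite (srcs V E)" using fV finite_subset by blast
    have eq: "{S. S \<in> Pow V \<and> S \<subseteq> srcs V E} = Pow (srcs V E)" using ss by auto
    show "w ^ card E * (x + 1) ^ card (srcs V E) = (\<Sum>S\<in>{S. S \<in> Pow V \<and> S \<subseteq> srcs V E}. w ^ card E * x ^ card S)"
      unfolding eq pow_sum[OF fs, symmetric] by (simp add: sum_distrib_left)
  qed
  also have "\<dots> = (\<Sum>S\<in>Pow V. \<Sum>E\<in>{E. E \<in> dagsOn V \<and> S \<subseteq> srcs V E}. w ^ card E * x ^ card S)"
    by (rule sum.swap_restrict) (use fD fV in auto)
  also have "\<dots> = (\<Sum>S\<in>Pow V. x ^ card S * (\<Sum>E\<in>{E \<in> dagsOn V. S \<subseteq> srcs V E}. w ^ card E))"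
    by (simp add: sum_distrib_left mult.commute)
  also have "\<dots> = (\<Sum>S\<in>Pow V. x ^ card S * (w + 1) ^ (card S * card (V - S)) * (\<Sum>E\<in>dagsOn (V - S). w ^ card E))"
    by (rule sum.cong[OF refl]) (simp add: split_sum[OF fV])
  finally show ?thesis .
qed

lemma group_card:
  assumes "finite V"
  shows "(\<Sum>S\<in>Pow V. (f (card S) :: real)) = (\<Sum>k\<le>card V. of_nat (card V choose k) * f k)"
proof -
  have "(\<Sum>S\<in>Pow V. f (card S)) = (\<Sum>k\<le>card V. \<Sum>S\<in>{S. S \<in> Pow V \<and> card S = k}. f (card S))"
    by (rule sum.group[symmetric]) (use assms in \<open>auto intro: card_mono\<close>)
  also have "\<dots> = (\<Sum>k\<le>card V. of_nat (card V choose k) * f k)"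
  proof (rule sum.cong[OF refl])
    fix k
    have "{S. S \<in> Pow V \<and> card S = k} = {S. S \<subseteq> V \<and> card S = k}" by auto
    then have "card {S. S \<in> Pow V \<and> card S = k} = card V choose k" using n_subsets[OF assms] by simp
    moreover have "(\<Sum>S\<in>{S. S \<in> Pow V \<and> card S = k}. f (card S)) = (\<Sum>S\<in>{S. S \<in> Pow V \<and> card S = k}. f k)"
      by (rule sum.cong) auto
    ultimately show "(\<Sum>S\<in>{S. S \<in> Pow V \<and> card S = k}. f (card S)) = of_nat (card V choose k) * f k" by simp
  qed
  finally show ?thesis .
qed



definition Sx :: "real \<Rightarrow> real \<Rightarrow> real fps" where
  "Sx w x = Abs_fps (\<lambda>k. x ^ k / ((w + 1) ^ (k choose 2) * fact k))"

definition Bw :: "real \<Rightarrow> real fps" where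
  "Bw w = inverse (Sx w (-1))"

definition c1 :: "real \<Rightarrow> nat \<Rightarrow> real" where
  "c1 w m = fps_nth (Bw w) m * ((w + 1) ^ (m choose 2) * fact m)"

lemma choose2_Suc: "Suc j choose 2 = j + (j choose 2)"
  using binomial_Suc_Suc[of j 1] by (simp add: numeral_2_eq_2)

lemma choose2_add: "(k + m) choose 2 = (k choose 2) + (m choose 2) + k * m"
  by (induction m) (simp_all add: choose2_Suc)

lemma term_eq:
  fixes w x b :: real
  assumes "k \<le> n" "w > 0"
  shows "of_nat (n choose k) * (x ^ k * (w + 1) ^ (k * (n - k)) * (b * ((w + 1) ^ ((n - k) choose 2) * fact (n - k))))
       = ((w + 1) ^ (n choose 2) * fact n) * (x ^ k / ((w + 1) ^ (k choose 2) * fact k) * b)"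
proof -
  obtain m where n: "n = k + m" using assms(1) le_Suc_ex by blast
  have f: "(fact n :: real) = fact k * fact m * of_nat (n choose k)"
    using binomial_fact_lemma[OF assms(1)] n by (metis of_nat_fact of_nat_mult add_diff_cancel_left')
  have p: "(w + 1) ^ (n choose 2) = (w + 1) ^ (k choose 2) * (w + 1) ^ (m choose 2) * (w + 1) ^ (k * m)"
    unfolding n choose2_add by (simp add: power_add)
  have "w + 1 \<noteq> 0" using assms(2) by linarith
  note w1 = this
  then have pos: "(w + 1) ^ (k choose 2) \<noteq> 0" "(fact k :: real) \<noteq> 0" using assms(2) by auto
  show ?thesis unfolding f p using n pos w1 by (simp add: field_simps)
qed

lemma M_eq:
  assumes "w > 0"
  shows "(\<Sum>k\<le>n. of_nat (n choose k) * (x ^ k * (w + 1) ^ (k * (n - k)) * c1 w (n - k)))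
       = ((w + 1) ^ (n choose 2) * fact n) * fps_nth (Sx w x * Bw w) n"
  unfolding fps_mult_nth sum_distrib_left atLeast0AtMost c1_def
  by (rule sum.cong[OF refl]) (use term_eq[OF _ assms] in \<open>simp add: Sx_def\<close>)

lemma Sx0: "fps_nth (Sx w x) 0 = 1" by (simp add: Sx_def binomial_eq_0)

lemma SB1: "Sx w (-1) * Bw w = 1"
  unfolding Bw_def by (rule inverse_mult_eq_1') (simp add: Sx0)

lemma L2:
  assumes "w > 0"
  shows "finite V \<Longrightarrow> (\<Sum>E\<in>dagsOn V. w ^ card E) = c1 w (card V)"
proof (induction "card V" arbitrary: V rule: less_induct)
  case less
  note fV = less.prems
  define n where "n = card V"
  have lhs: "(\<Sum>E\<in>dagsOn V. w ^ card E * (-1 + 1) ^ card (srcs V E)) = (if V = {} then 1 else 0)"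
  proof (cases "V = {}")
    case True
    have "dagsOn V = {{}}" using True by (auto simp: dagsOn_def acyclic_def)
    then show ?thesis using True by (simp add: srcs_def)
  next
    case False
    have "card (srcs V E) \<noteq> 0" if "E \<in> dagsOn V" for E
    proof -
      have "srcs V E \<subseteq> V" by (auto simp: srcs_def)
      then have "finite (srcs V E)" using fV finite_subset by blast
      then show ?thesis using has_source[OF fV False that] by simp
    qed
    then have "\<forall>E\<in>dagsOn V. w ^ card E * (-1 + 1) ^ card (srcs V E) = 0" by simp
    then have "(\<Sum>E\<in>dagsOn V. w ^ card E * (-1 + 1) ^ card (srcs V E)) = 0" by (rule sum.neutral)
    then show ?thesis using False by simp
  qed
  have cdiff: "card (V - S) = card V - card S" if "S \<in> Pow V" for S
    using that fV by (simp add: card_Diff_subset finite_subset)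
  have csum: "(\<Sum>S\<in>Pow V. (-1) ^ card S * (w + 1) ^ (card S * card (V - S)) * c1 w (card (V - S)))
      = (if V = {} then 1 else 0)"
  proof -
    have "(\<Sum>S\<in>Pow V. (-1) ^ card S * (w + 1) ^ (card S * card (V - S)) * c1 w (card (V - S)))
        = (\<Sum>S\<in>Pow V. (\<lambda>k. (-1) ^ k * (w + 1) ^ (k * (n - k)) * c1 w (n - k)) (card S))"
      by (rule sum.cong[OF refl]) (simp add: cdiff n_def)
    also have "\<dots> = (\<Sum>k\<le>n. of_nat (n choose k) * ((-1) ^ k * (w + 1) ^ (k * (n - k)) * c1 w (n - k)))"
      using group_card[OF fV] n_def by simp
    also have "\<dots> = ((w + 1) ^ (n choose 2) * fact n) * fps_nth (Sx w (-1) * Bw w) n"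
      by (rule M_eq[OF assms])
    also have "\<dots> = (if V = {} then 1 else 0)"
      using fV by (simp add: SB1 n_def binomial_eq_0)
    finally show ?thesis .
  qed
  have psum: "(\<Sum>S\<in>Pow V. (-1) ^ card S * (w + 1) ^ (card S * card (V - S)) * (\<Sum>E\<in>dagsOn (V - S). w ^ card E))
      = (if V = {} then 1 else 0)"
    using L1[OF fV, of w "-1"] lhs by simp
  have e0: "{} \<in> Pow V" by simp
  have rest: "(\<Sum>S\<in>Pow V - {{}}. (-1) ^ card S * (w + 1) ^ (card S * card (V - S)) * (\<Sum>E\<in>dagsOn (V - S). w ^ card E))
      = (\<Sum>S\<in>Pow V - {{}}. (-1) ^ card S * (w + 1) ^ (card S * card (V - S)) * c1 w (card (V - S)))"
  proof (rule sum.cong[OF refl])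
    fix S assume S: "S \<in> Pow V - {{}}"
    then have "finite S" "S \<noteq> {}" "S \<subseteq> V" using fV finite_subset by auto
    then have c: "card (V - S) = card V - card S" "0 < card S" "card S \<le> card V"
      using card_Diff_subset[of S V] card_gt_0_iff[of S] card_mono[OF fV, of S] by auto
    then have "card (V - S) < card V" by linarith
    then have "(\<Sum>E\<in>dagsOn (V - S). w ^ card E) = c1 w (card (V - S))"
      using less.hyps[of "V - S"] fV by simp
    then show "(-1) ^ card S * (w + 1) ^ (card S * card (V - S)) * (\<Sum>E\<in>dagsOn (V - S). w ^ card E)
      = (-1) ^ card S * (w + 1) ^ (card S * card (V - S)) * c1 w (card (V - S))" by simp
  qed
  have fP: "finite (Pow V)" using fV by simp
  have "(-1) ^ card ({}::nat set) * (w + 1) ^ (card ({}::nat set) * card (V - {})) * (\<Sum>E\<in>dagsOn (V - {}). w ^ card E)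
      = (-1) ^ card ({}::nat set) * (w + 1) ^ (card ({}::nat set) * card (V - {})) * c1 w (card (V - {}))"
    using psum csum rest sum.remove[OF fP e0, of "\<lambda>S. (-1) ^ card S * (w + 1) ^ (card S * card (V - S)) * (\<Sum>E\<in>dagsOn (V - S). w ^ card E)"]
      sum.remove[OF fP e0, of "\<lambda>S. (-1) ^ card S * (w + 1) ^ (card S * card (V - S)) * c1 w (card (V - S))"]
    by linarith
  then show ?case by simp
qed

lemma numer_eq:
  assumes "w > 0"
  shows "(\<Sum>E\<in>dags n. w ^ card E * u ^ sources n E) = ((w + 1) ^ (n choose 2) * fact n) * fps_nth (Sx w (u - 1) * Bw w) n"
proof -
  define V where "V = {1..n}"
  have fV: "finite V" and cV: "card V = n" by (simp_all add: V_def)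
  have cdiff: "card (V - S) = card V - card S" if "S \<in> Pow V" for S
    using that fV by (simp add: card_Diff_subset finite_subset)
  have "(\<Sum>E\<in>dags n. w ^ card E * u ^ sources n E) = (\<Sum>E\<in>dagsOn V. w ^ card E * ((u - 1) + 1) ^ card (srcs V E))"
    by (simp add: dags_def dagsOn_def sources_def srcs_def V_def)
  also have "\<dots> = (\<Sum>S\<in>Pow V. (u - 1) ^ card S * (w + 1) ^ (card S * card (V - S)) * (\<Sum>E\<in>dagsOn (V - S). w ^ card E))"
    by (rule L1[OF fV])
  also have "\<dots> = (\<Sum>S\<in>Pow V. (\<lambda>k. (u - 1) ^ k * (w + 1) ^ (k * (n - k)) * c1 w (n - k)) (card S))"
  proof (rule sum.cong[OF refl])
    fix S assume S: "S \<in> Pow V"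
    then have "finite (V - S)" using fV by simp
    then show "(u - 1) ^ card S * (w + 1) ^ (card S * card (V - S)) * (\<Sum>E\<in>dagsOn (V - S). w ^ card E)
       = (\<lambda>k. (u - 1) ^ k * (w + 1) ^ (k * (n - k)) * c1 w (n - k)) (card S)"
      using L2[OF assms] cdiff[OF S] cV by simp
  qed
  also have "\<dots> = (\<Sum>k\<le>n. of_nat (n choose k) * ((u - 1) ^ k * (w + 1) ^ (k * (n - k)) * c1 w (n - k)))"
    using group_card[OF fV] cV by simp
  also have "\<dots> = ((w + 1) ^ (n choose 2) * fact n) * fps_nth (Sx w (u - 1) * Bw w) n"
    by (rule M_eq[OF assms])
  finally show ?thesis .
qed

lemma DAG_eq:
  assumes "w > 0"
  shows "DAG_fps w u = Sx w (u - 1) * Bw w"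
proof (rule fps_ext)
  fix n
  have "w + 1 \<noteq> 0" using assms by linarith
  then have nz: "(1 + w) ^ (n choose 2) * fact n \<noteq> (0::real)" by (simp add: add.commute)
  show "fps_nth (DAG_fps w u) n = fps_nth (Sx w (u - 1) * Bw w) n"
    unfolding DAG_fps_def fps_nth_Abs_fps dag_coeff_def numer_eq[OF assms]
    using nz by (simp add: add.commute)
qed



lemma integrand_eq:
  assumes "w > 0"
  shows "fps_nth (DAG_fps w t oo (fps_const (1 / (1 + w)) * fps_X)) m
       = (1 / (1 + w)) ^ m * (\<Sum>i\<le>m. (t - 1) ^ i / ((w + 1) ^ (i choose 2) * fact i) * fps_nth (Bw w) (m - i))"
  unfolding fps_nth_compose_linear DAG_eq[OF assms] fps_mult_nth atLeast0AtMost
  by (simp add: Sx_def)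

lemma integral_eq:
  assumes "w > 0"
  shows "(LBINT t=ereal 0..ereal u. fps_nth (DAG_fps w t oo (fps_const (1 / (1 + w)) * fps_X)) m)
       = (1 / (1 + w)) ^ m * (\<Sum>i\<le>m. ((u - 1) ^ Suc i - (-1) ^ Suc i) / ((w + 1) ^ (i choose 2) * fact (Suc i)) * fps_nth (Bw w) (m - i))"
proof -
  have w1: "w + 1 \<noteq> 0" using assms by linarith
  define K where "K i = fps_nth (Bw w) (m - i) / ((w + 1) ^ (i choose 2) * fact (Suc i))" for i
  define f where "f t = (1 / (1 + w)) ^ m * (\<Sum>i\<le>m. of_nat (Suc i) * (t - 1) ^ i * K i)" for t
  define F where "F t = (1 / (1 + w)) ^ m * (\<Sum>i\<le>m. (t - 1) ^ Suc i * K i)" for t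
  have "(\<lambda>t. fps_nth (DAG_fps w t oo (fps_const (1 / (1 + w)) * fps_X)) m) = f"
  proof (rule ext)
    fix t
    have "(t - 1) ^ i / ((w + 1) ^ (i choose 2) * fact i) * fps_nth (Bw w) (m - i) = of_nat (Suc i) * (t - 1) ^ i * K i" for i
      using w1 unfolding K_def fact_Suc by (simp add: field_simps del: of_nat_Suc)
    then show "fps_nth (DAG_fps w t oo (fps_const (1 / (1 + w)) * fps_X)) m = f t"
      unfolding integrand_eq[OF assms] f_def by simp
  qed
  then have "(LBINT t=ereal 0..ereal u. fps_nth (DAG_fps w t oo (fps_const (1 / (1 + w)) * fps_X)) m)
      = (LBINT t=ereal 0..ereal u. f t)" by simp
  also have "\<dots> = F u - F 0"
  proof (rule interval_integral_FTC_finite)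
    show "continuous_on {min 0 u..max 0 u} f" unfolding f_def by (intro continuous_intros)
    fix x
    have d: "((\<lambda>t. (t - 1) ^ Suc i * K i) has_real_derivative (of_nat (Suc i) * (x - 1) ^ i * K i))
        (at x within {min 0 u..max 0 u})" for i
    proof (rule DERIV_cmult_right)
      have "((\<lambda>t. (t - 1) ^ Suc i) has_real_derivative (of_nat (Suc i) * ((1 - 0) * (x - 1) ^ (Suc i - Suc 0))))
        (at x within {min 0 u..max 0 u})"
        by (intro DERIV_power DERIV_diff DERIV_ident DERIV_const)
      then show "((\<lambda>t. (t - 1) ^ Suc i) has_real_derivative (of_nat (Suc i) * (x - 1) ^ i))
        (at x within {min 0 u..max 0 u})" by simp
    qed
    have "(F has_real_derivative f x) (at x within {min 0 u..max 0 u})"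
      unfolding F_def f_def by (intro DERIV_cmult DERIV_sum d)
    then show "(F has_vector_derivative f x) (at x within {min 0 u..max 0 u})"
      by (simp add: has_real_derivative_iff_has_vector_derivative)
  qed
  also have "\<dots> = (1 / (1 + w)) ^ m * (\<Sum>i\<le>m. ((u - 1) ^ Suc i - (-1) ^ Suc i) / ((w + 1) ^ (i choose 2) * fact (Suc i)) * fps_nth (Bw w) (m - i))"
    unfolding F_def right_diff_distrib[symmetric] sum_subtractf[symmetric]
    by (intro arg_cong2[where f="(*)"] refl sum.cong) (simp add: K_def, simp only: left_diff_distrib distrib_right add_divide_distrib diff_divide_distrib)
  finally show ?thesis .
qed

lemma H_term:
  fixes w X b :: real
  assumes "w > 0" "i \<le> m"
  shows "(1 / (1 + w)) ^ m * (X / ((w + 1) ^ (i choose 2) * fact (Suc i)) * b)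
       = X / ((w + 1) ^ (Suc i choose 2) * fact (Suc i)) * ((1 / (1 + w)) ^ (m - i) * b)"
proof -
  have w1: "w + 1 \<noteq> 0" "1 + w \<noteq> 0" using assms by linarith+
  obtain k where m: "m = i + k" using assms(2) le_Suc_ex by blast
  have "(1 / (1 + w)) ^ m = (1 / (1 + w)) ^ (m - i) / (w + 1) ^ i"
    unfolding m by (simp add: power_add power_divide add.commute)
  moreover have "(w + 1) ^ (Suc i choose 2) = (w + 1) ^ i * (w + 1) ^ (i choose 2)"
    by (simp add: choose2_Suc power_add)
  ultimately show ?thesis using w1 by (simp add: mult_ac)
qed

lemma H_eq:
  assumes "w > 0"
  shows "H_fps w u = (Sx w (u - 1) - Sx w (-1)) * (Bw w oo (fps_const (1 / (1 + w)) * fps_X))"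
proof (rule fps_ext)
  fix n
  show "fps_nth (H_fps w u) n = fps_nth ((Sx w (u - 1) - Sx w (-1)) * (Bw w oo (fps_const (1 / (1 + w)) * fps_X))) n"
  proof (cases n)
    case 0
    then show ?thesis by (simp add: H_fps_def Sx0)
  next
    case (Suc m)
    have "fps_nth (H_fps w u) n = (1 / (1 + w)) ^ m * (\<Sum>i\<le>m. ((u - 1) ^ Suc i - (-1) ^ Suc i) / ((w + 1) ^ (i choose 2) * fact (Suc i)) * fps_nth (Bw w) (m - i))"
      unfolding H_fps_def Suc fps_X_mult_nth by (simp del: fps_nth_compose_linear add: integral_eq[OF assms])
    also have "\<dots> = (\<Sum>i\<le>m. ((u - 1) ^ Suc i - (-1) ^ Suc i) / ((w + 1) ^ (Suc i choose 2) * fact (Suc i)) * ((1 / (1 + w)) ^ (m - i) * fps_nth (Bw w) (m - i)))"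
      unfolding sum_distrib_left by (rule sum.cong[OF refl]) (rule H_term[OF assms], simp)
    also have "\<dots> = fps_nth ((Sx w (u - 1) - Sx w (-1)) * (Bw w oo (fps_const (1 / (1 + w)) * fps_X))) n"
      unfolding Suc fps_mult_nth sum.atLeast0_atMost_Suc_shift fps_nth_compose_linear
      apply (simp add: Sx0 atLeast0AtMost Sx_def diff_divide_distrib)
      apply (intro sum.cong refl)
      apply (simp add: add_divide_distrib diff_divide_distrib algebra_simps)
      done
    finally show ?thesis .
  qed
qed



theorem lemma10:
  fixes w u :: real
  assumes "w > 0"
  shows "DAG_fps w u = 1 + H_fps w u / (1 - H_fps w (w / (1 + w)))"
proof -
  define q where "q = 1 / (1 + w)"
  define c where "c = fps_const q * fps_X"
  define A where "A = Sx w (u - 1)"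
  define M where "M = Sx w (-1)"
  define iM where "iM = Bw w"
  define N where "N = Sx w (-q)"
  define iN where "iN = Bw w oo c"
  have w1: "1 + w \<noteq> 0" using assms by linarith
  have c0: "fps_nth c 0 = 0" by (simp add: c_def)
  have MiM: "M * iM = 1" unfolding M_def iM_def by (rule SB1)
  have Mc: "M oo c = N"
  proof (rule fps_ext)
    fix n
    show "fps_nth (M oo c) n = fps_nth N n"
      unfolding M_def N_def c_def fps_nth_compose_linear by (simp add: Sx_def power_minus[of q])
  qed
  have NiN: "N * iN = 1"
  proof -
    have "(M * iM) oo c = 1" using MiM by simp
    then show ?thesis unfolding fps_compose_mult_distrib[OF c0] Mc iN_def iM_def by simp
  qed
  have D: "DAG_fps w u = A * iM" unfolding A_def iM_def by (rule DAG_eq[OF assms])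
  have H1: "H_fps w u = (A - M) * iN" unfolding A_def M_def iN_def c_def q_def by (rule H_eq[OF assms])
  have "w / (1 + w) - 1 = - q" unfolding q_def using w1 by (simp add: field_simps)
  then have H2: "H_fps w (w / (1 + w)) = (N - M) * iN"
    unfolding N_def M_def iN_def c_def using H_eq[OF assms, of "w / (1 + w)"] q_def by simp
  have H3: "1 - H_fps w (w / (1 + w)) = M * iN"
    unfolding H2 using NiN by (simp add: algebra_simps)
  have "fps_nth N 0 * fps_nth iN 0 = 1" using NiN by (metis fps_mult_nth_0 fps_one_nth)
  then have "fps_nth iN 0 \<noteq> 0" by auto
  moreover have "fps_nth M 0 = 1" unfolding M_def by (rule Sx0)
  ultimately have nz: "fps_nth (M * iN) 0 \<noteq> 0" by simp
  have inv: "inverse (M * iN) = N * iM"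
  proof (rule fps_inverse_unique)
    have "M * iN * (N * iM) = (M * iM) * (N * iN)" by (simp add: ac_simps)
    then show "M * iN * (N * iM) = 1" using MiM NiN by simp
  qed
  have "1 + H_fps w u / (1 - H_fps w (w / (1 + w))) = 1 + (A - M) * iN * (N * iM)"
    unfolding H1 H3 fps_divide_unit[OF nz] inv by simp
  also have "(A - M) * iN * (N * iM) = (A - M) * iM * (N * iN)" by (simp add: ac_simps)
  also have "\<dots> = A * iM - 1" using NiN MiM by (simp add: algebra_simps)
  finally show ?thesis using D by simp
qed

end
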